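(* Let $S=\{s_f^h : f\in\{1,\dots,F\},\ h\in\{1,\dots,H\}\}$ and, for $X\subseteq S$, let $\mathbf{X}(X)\in\{0,1\}^{F\times H}$ be given by $x_{f,h}=1$ iff $s_f^h\in X$. Define the set function $G:2^S\to\mathbb{R}$ by $$G(X)=\sum_{u=1}^U\big(\omega_{0,u}-\bar D_u(\mathbf{X}(X))\big),$$ where, for a placement $\mathbf{X}$, $$\bar D_u=\sum_{j=1}^{|\mathcal{H}(u)|-1}\omega_{(j)_u,u}\sum_{f=1}^F\Big[\prod_{i=1}^{j-1}(1-x_{f,(i)_u})\Big]x_{f,(j)_u}P_f+\omega_{0,u}\sum_{f=1}^F\Big[\prod_{i=1}^{|\mathcal{H}(u)|-1}(1-x_{f,(i)_u})\Big]P_f.$$ Then $G$ is a monotone (nondecreasing) submodular set function.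
   Context: Setting: helpers $\{0,1,\dots,H\}$, where helper $0$ is the base station; users $\{1,\dots,U\}$; files $\{1,\dots,F\}$ with request probabilities $P_f\ge 0$, $\sum_f P_f=1$. A bipartite graph with edge set $\mathcal{E}$ between helpers and users, with $(0,u)\in\mathcal{E}$ for all $u$; $\mathcal{H}(u)=\{h:(h,u)\in\mathcal{E}\}$ (so $0\in\mathcal{H}(u)$). Nonnegative reals $\omega_{h,u}$ (average download time per bit on link $(h,u)$) satisfy $\omega_{0,u}\ge\omega_{h,u}$ for all $(h,u)\in\mathcal{E}$, and $\omega_{h,u}=\omega_\infty$ for $(h,u)\notin\mathcal{E}$, where $\omega_\infty$ is a constant much larger than $\max_u\omega_{0,u}$. For each user $u$, $(j)_u$ denotes the helper in $\mathcal{H}(u)$ with the $j$-th smallest delay $\omega_{(j)_u,u}$, with the ordering chosen so that $(|\mathcal{H}(u)|)_u=0$ (the base station is last). Conventions: an empty product equals $1$, an empty sum equals $0$. Set functions: $G$ is submodular if $G(A\cup\{i\})-G(A)\ge G(B\cup\{i\})-G(B)$ for all $A\subseteq B\subseteq S$ and $i\in S\setminus B$; monotone if $A\subseteq B$ implies $G(A)\le G(B)$. *)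

theory Defs
  imports "HOL-Analysis.Analysis"
begin

text \<open>Helpers are 0..H (0 = base station), users 1..U, files 1..F.
  The edge set E consists of pairs (h,u).  The neighbourhood of user u: \<close>
definition Hset :: "(nat \<times> nat) set \<Rightarrow> nat \<Rightarrow> nat \<Rightarrow> nat set" where
  "Hset E H u = {h. h \<le> H \<and> (h, u) \<in> E}"

definition Sground :: "nat \<Rightarrow> nat \<Rightarrow> (nat \<times> nat) set" where
  "Sground F H = {1..F} \<times> {1..H}"

definition xX :: "(nat \<times> nat) set \<Rightarrow> nat \<Rightarrow> nat \<Rightarrow> real" where
  "xX X f h = (if (f, h) \<in> X then 1 else 0)"

text \<open>Average delay of user u; ordu u j is the helper (j)_u, m = |H(u)|.\<close>
definition Dbar :: "(nat \<Rightarrow> nat \<Rightarrow> real) \<Rightarrow> (nat \<Rightarrow> real) \<Rightarrow> nat \<Rightarrow>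
    (nat \<Rightarrow> nat \<Rightarrow> nat) \<Rightarrow> nat \<Rightarrow> (nat \<times> nat) set \<Rightarrow> nat \<Rightarrow> real" where
  "Dbar \<omega> P F ordu m X u =
     (\<Sum>j = 1..m - 1. \<omega> (ordu u j) u *
        (\<Sum>f = 1..F. (\<Prod>i = 1..j - 1. 1 - xX X f (ordu u i)) * xX X f (ordu u j) * P f))
   + \<omega> 0 u * (\<Sum>f = 1..F. (\<Prod>i = 1..m - 1. 1 - xX X f (ordu u i)) * P f)"

definition Gfun :: "(nat \<times> nat) set \<Rightarrow> nat \<Rightarrow> nat \<Rightarrow> nat \<Rightarrow> (nat \<Rightarrow> nat \<Rightarrow> real) \<Rightarrow>
    (nat \<Rightarrow> real) \<Rightarrow> (nat \<Rightarrow> nat \<Rightarrow> nat) \<Rightarrow> (nat \<times> nat) set \<Rightarrow> real" where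
  "Gfun E H U F \<omega> P ordu X =
     (\<Sum>u = 1..U. \<omega> 0 u - Dbar \<omega> P F ordu (card (Hset E H u)) X u)"

definition submodular_set_fun :: "'a set \<Rightarrow> ('a set \<Rightarrow> real) \<Rightarrow> bool" where
  "submodular_set_fun S G \<longleftrightarrow>
     (\<forall>A B i. A \<subseteq> B \<and> B \<subseteq> S \<and> i \<in> S - B \<longrightarrow>
        G (A \<union> {i}) - G A \<ge> G (B \<union> {i}) - G B)"

definition monotone_set_fun :: "'a set \<Rightarrow> ('a set \<Rightarrow> real) \<Rightarrow> bool" where
  "monotone_set_fun S G \<longleftrightarrow> (\<forall>A B. A \<subseteq> B \<and> B \<subseteq> S \<longrightarrow> G A \<le> G B)"

end

theory Submission
  imports Defs
begin

lemma cost_min: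
  fixes w x :: "nat \<Rightarrow> real" and m :: nat
  assumes m1: "1 \<le> m" and x01: "\<forall>i. x i = 0 \<or> x i = 1"
    and sorted: "\<forall>i j. 1 \<le> i \<and> i \<le> j \<and> j \<le> m \<longrightarrow> w i \<le> w j"
  shows "(\<Sum>j=1..m-1. w j * ((\<Prod>i=1..j-1. 1 - x i) * x j)) + w m * (\<Prod>i=1..m-1. 1 - x i)
        = Min (w ` ({j\<in>{1..m-1}. x j = 1} \<union> {m}))"
proof (cases "\<exists>j\<in>{1..m-1}. x j = 1")
  case True
  define k where "k = (LEAST j. j \<in> {1..m-1} \<and> x j = 1)"
  have kP: "k \<in> {1..m-1} \<and> x k = 1" using True unfolding k_def
    by (metis (mono_tags, lifting) LeastI)
  have kmin: "\<And>j. j \<in> {1..m-1} \<Longrightarrow> x j = 1 \<Longrightarrow> k \<le> j" unfolding k_def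
    by (simp add: Least_le)
  have below: "\<And>j. 1 \<le> j \<Longrightarrow> j < k \<Longrightarrow> x j = 0" using kmin x01 kP
    by (metis atLeastAtMost_iff le_trans less_imp_le_nat not_le)
  have prodk: "(\<Prod>i=1..k-1. 1 - x i) = 1"
    by (rule prod.neutral) (use below kP in auto)
  have prod0: "\<And>j. k < j \<Longrightarrow> (\<Prod>i=1..j-1. 1 - x i) = 0"
    by (rule prod_zero) (use kP in auto)
  have "(\<Sum>j=1..m-1. w j * ((\<Prod>i=1..j-1. 1 - x i) * x j))
      = w k * ((\<Prod>i=1..k-1. 1 - x i) * x k) + (\<Sum>j\<in>{1..m-1}-{k}. w j * ((\<Prod>i=1..j-1. 1 - x i) * x j))"
    using kP by (subst sum.remove[of _ k]) auto
  also have "(\<Sum>j\<in>{1..m-1}-{k}. w j * ((\<Prod>i=1..j-1. 1 - x i) * x j)) = 0"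
  proof (rule sum.neutral, rule ballI)
    fix j assume j: "j \<in> {1..m-1}-{k}"
    show "w j * ((\<Prod>i=1..j-1. 1 - x i) * x j) = 0"
    proof (cases "j < k")
      case True then show ?thesis using below j by auto
    next
      case False then have "k < j" using j by auto
      then show ?thesis using prod0 by simp
    qed
  qed
  finally have s: "(\<Sum>j=1..m-1. w j * ((\<Prod>i=1..j-1. 1 - x i) * x j)) = w k"
    using prodk kP by simp
  have km: "k < m" using kP m1 by auto
  have l: "w m * (\<Prod>i=1..m-1. 1 - x i) = 0" using prod0[OF km] by simp
  have "Min (w ` ({j\<in>{1..m-1}. x j = 1} \<union> {m})) = w k"
  proof (rule Min_eqI)
    show "finite (w ` ({j\<in>{1..m-1}. x j = 1} \<union> {m}))" by auto
    show "w k \<in> w ` ({j\<in>{1..m-1}. x j = 1} \<union> {m})" using kP by auto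
    fix y assume "y \<in> w ` ({j\<in>{1..m-1}. x j = 1} \<union> {m})"
    then obtain j where j: "j \<in> {j\<in>{1..m-1}. x j = 1} \<union> {m}" "y = w j" by auto
    have "k \<le> j" "j \<le> m" using j kmin km by auto
    then show "w k \<le> y" using sorted kP j(2) by auto
  qed
  then show ?thesis using s l by simp
next
  case False
  then have x0: "\<And>j. j \<in> {1..m-1} \<Longrightarrow> x j = 0" using x01 by blast
  have s: "(\<Sum>j=1..m-1. w j * ((\<Prod>i=1..j-1. 1 - x i) * x j)) = 0"
    by (rule sum.neutral) (use x0 in auto)
  have p: "(\<Prod>i=1..m-1. 1 - x i) = 1"
    by (rule prod.neutral) (use x0 in auto)
  have e: "{j\<in>{1..m-1}. x j = 1} = {}" using False by auto
  show ?thesis unfolding e using s p by simp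
qed

lemma Dbar_eq: "Dbar \<omega> P F ordu m X u = (\<Sum>f=1..F. P f * ((\<Sum>j=1..m-1. \<omega> (ordu u j) u * ((\<Prod>i=1..j-1. 1 - xX X f (ordu u i)) * xX X f (ordu u j))) + \<omega> 0 u * (\<Prod>i=1..m-1. 1 - xX X f (ordu u i))))"
  unfolding Dbar_def
  by (simp add: sum.distrib distrib_left sum_distrib_left mult_ac) (rule sum.swap)


lemma cset_ins:
  fixes w :: "nat \<Rightarrow> real"
  shows "Min (w ` ({j\<in>{1..m-1}. xX (X \<union> {i}) f (g j) = 1} \<union> {m})) =
    (if {j\<in>{1..m-1}. (f, g j) = i} = {} then Min (w ` ({j\<in>{1..m-1}. xX X f (g j) = 1} \<union> {m}))
     else min (Min (w ` ({j\<in>{1..m-1}. xX X f (g j) = 1} \<union> {m}))) (Min (w ` {j\<in>{1..m-1}. (f, g j) = i})))"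
proof -
  have eq: "{j\<in>{1..m-1}. xX (X \<union> {i}) f (g j) = 1} \<union> {m} =
     ({j\<in>{1..m-1}. xX X f (g j) = 1} \<union> {m}) \<union> {j\<in>{1..m-1}. (f, g j) = i}"
    by (auto simp: xX_def)
  show ?thesis
  proof (cases "{j\<in>{1..m-1}. (f, g j) = i} = {}")
    case True then show ?thesis unfolding eq by (simp only: Un_empty_right if_True simp_thms)
  next
    case False
    have fin: "finite {j\<in>{1..m-1}. (f, g j) = i}" by simp
    have "Min (w ` (({j\<in>{1..m-1}. xX X f (g j) = 1} \<union> {m}) \<union> {j\<in>{1..m-1}. (f, g j) = i}))
      = min (Min (w ` ({j\<in>{1..m-1}. xX X f (g j) = 1} \<union> {m}))) (Min (w ` {j\<in>{1..m-1}. (f, g j) = i}))"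
      unfolding image_Un[of w "{j\<in>{1..m-1}. xX X f (g j) = 1} \<union> {m}"]
      by (rule Min_Un) (use False fin in auto)
    then show ?thesis unfolding eq using False by (simp only: if_False)
  qed
qed

lemma submod_real: "(b::real) \<le> a \<Longrightarrow> a - min a c \<ge> b - min b c"
  by (simp add: min_def)

theorem mainTheorem3:
  fixes H U F :: nat
    and E :: "(nat \<times> nat) set"
    and \<omega> :: "nat \<Rightarrow> nat \<Rightarrow> real"
    and \<omega>inf :: real
    and P :: "nat \<Rightarrow> real"
    and ordu :: "nat \<Rightarrow> nat \<Rightarrow> nat"
  assumes P_nonneg: "\<forall>f\<in>{1..F}. P f \<ge> 0"
    and P_sum: "(\<Sum>f = 1..F. P f) = 1"
    and E_sub: "E \<subseteq> {0..H} \<times> {1..U}"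
    and base_edge: "\<forall>u\<in>{1..U}. (0, u) \<in> E"
    and \<omega>_nonneg: "\<forall>h u. \<omega> h u \<ge> 0"
    and \<omega>_base: "\<forall>(h, u)\<in>E. \<omega> 0 u \<ge> \<omega> h u"
    and \<omega>_inf: "\<forall>h u. (h, u) \<notin> E \<longrightarrow> \<omega> h u = \<omega>inf"
    and \<omega>inf_large: "\<forall>u\<in>{1..U}. \<omega>inf > \<omega> 0 u"
    and ord_bij: "\<forall>u\<in>{1..U}. bij_betw (ordu u) {1..card (Hset E H u)} (Hset E H u)"
    and ord_sorted: "\<forall>u\<in>{1..U}. \<forall>i j. 1 \<le> i \<and> i \<le> j \<and> j \<le> card (Hset E H u) \<longrightarrow>
                        \<omega> (ordu u i) u \<le> \<omega> (ordu u j) u"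
    and ord_last: "\<forall>u\<in>{1..U}. ordu u (card (Hset E H u)) = 0"
  shows "monotone_set_fun (Sground F H) (Gfun E H U F \<omega> P ordu)
       \<and> submodular_set_fun (Sground F H) (Gfun E H U F \<omega> P ordu)"
proof -
  define m where "m u = card (Hset E H u)" for u
  define c where "c u f X = Min ((\<lambda>j. \<omega> (ordu u j) u) ` ({j\<in>{1..m u-1}. xX X f (ordu u j) = 1} \<union> {m u}))" for u f X
  have m1: "1 \<le> m u" if "u \<in> {1..U}" for u
  proof -
    have "0 \<in> Hset E H u" using base_edge that by (simp add: Hset_def)
    moreover have "finite (Hset E H u)" unfolding Hset_def by simp
    ultimately show ?thesis unfolding m_def
      by (metis One_nat_def Suc_leI card_gt_0_iff empty_iff)
  qed
  have D: "Dbar \<omega> P F ordu (m u) X u = (\<Sum>f=1..F. P f * c u f X)" if u: "u \<in> {1..U}" for u X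
    unfolding Dbar_eq
  proof (rule sum.cong[OF refl])
    fix f
    have w0: "\<omega> 0 u = \<omega> (ordu u (m u)) u" using ord_last u by (simp add: m_def)
    have "(\<Sum>j=1..m u-1. \<omega> (ordu u j) u * ((\<Prod>i=1..j-1. 1 - xX X f (ordu u i)) * xX X f (ordu u j))) + \<omega> (ordu u (m u)) u * (\<Prod>i=1..m u-1. 1 - xX X f (ordu u i)) = c u f X"
      unfolding c_def
      by (rule cost_min[where x="\<lambda>i. xX X f (ordu u i)" and w="\<lambda>j. \<omega> (ordu u j) u"])
         (use m1[OF u] ord_sorted u in \<open>auto simp: xX_def m_def\<close>)
    then show "P f * ((\<Sum>j=1..m u-1. \<omega> (ordu u j) u * ((\<Prod>i=1..j-1. 1 - xX X f (ordu u i)) * xX X f (ordu u j))) + \<omega> 0 u * (\<Prod>i=1..m u-1. 1 - xX X f (ordu u i))) = P f * c u f X"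
      using w0 by simp
  qed
  have G: "Gfun E H U F \<omega> P ordu X = (\<Sum>u=1..U. \<omega> 0 u - (\<Sum>f=1..F. P f * c u f X))" for X
    unfolding Gfun_def m_def[symmetric] using D by (intro sum.cong) auto
  have cmono: "c u f B \<le> c u f A" if "A \<subseteq> B" for u f A B
    unfolding c_def
    by (rule Min_antimono) (use that in \<open>auto simp: xX_def split: if_splits\<close>)
  have csub: "c u f A - c u f (A \<union> {i}) \<ge> c u f B - c u f (B \<union> {i})" if "A \<subseteq> B" for u f A B i
  proof (cases "{j\<in>{1..m u-1}. (f, ordu u j) = i} = {}")
    case True then show ?thesis unfolding c_def cset_ins by simp
  next
    case False
    show ?thesis unfolding c_def cset_ins using False
      by (simp only: if_False) (rule submod_real, rule cmono[OF that, unfolded c_def])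
  qed
  have Pn: "\<And>f. f \<in> {1..F} \<Longrightarrow> P f \<ge> 0" using P_nonneg by auto
  have mono: "monotone_set_fun (Sground F H) (Gfun E H U F \<omega> P ordu)"
    unfolding monotone_set_fun_def G
  proof (intro allI impI sum_mono)
    fix A B u assume "A \<subseteq> B \<and> B \<subseteq> Sground F H"
    then have "P f * c u f B \<le> P f * c u f A" if "f \<in> {1..F}" for f
      using cmono Pn[OF that] by (simp add: mult_left_mono)
    then have "(\<Sum>f=1..F. P f * c u f B) \<le> (\<Sum>f=1..F. P f * c u f A)"
      by (rule sum_mono)
    then show "\<omega> 0 u - (\<Sum>f=1..F. P f * c u f A) \<le> \<omega> 0 u - (\<Sum>f=1..F. P f * c u f B)"
      by simp
  qed
  have dif: "Gfun E H U F \<omega> P ordu (X \<union> {i}) - Gfun E H U F \<omega> P ordu X =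
      (\<Sum>u=1..U. \<Sum>f=1..F. P f * (c u f X - c u f (X \<union> {i})))" for X i
    unfolding G by (simp add: sum_subtractf right_diff_distrib)
  have sub: "submodular_set_fun (Sground F H) (Gfun E H U F \<omega> P ordu)"
    unfolding submodular_set_fun_def dif
  proof (intro allI impI sum_mono)
    fix A B i u f assume "A \<subseteq> B \<and> B \<subseteq> Sground F H \<and> i \<in> Sground F H - B" "f \<in> {1..F}"
    then show "P f * (c u f B - c u f (B \<union> {i})) \<le> P f * (c u f A - c u f (A \<union> {i}))"
      using csub Pn by (simp add: mult_left_mono)
  qed
  show ?thesis using mono sub by simp
qed

end
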